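(* Let $H$ be a separable Hilbert space, $(\Omega,\mathcal{A},\mu)$ a measure space, $f\in L^\infty_\mu(\Omega)$ real-valued with multiplication operator $M_f$ on $L^2_\mu(\Omega)$, and $V:H\to L^2_\mu(\Omega)$ an invertible bounded linear operator such that $A=V^{-1}M_fV$ is surjective. Let $\mathcal{F}(x):=-\frac12(Vx,M_fVx)_{L^2_\mu(\Omega)}$. Then $\mathcal{F}$ is $\tilde\lambda$-convex on the Hilbert space $H$, i.e. $\mathcal{F}((1-\theta)x_1+\theta x_2)\le(1-\theta)\mathcal{F}(x_1)+\theta\mathcal{F}(x_2)-\tilde\lambda\frac{\theta(1-\theta)}{2}\|x_1-x_2\|_H^2$ for all $x_1,x_2\in H$, $\theta\in[0,1]$, where $$\tilde\lambda:=-\operatorname*{ess\,sup}_{\omega\in\Omega}f(\omega)\,\tilde c_V,\qquad \tilde c_V:=\begin{cases}\|V\|^2,&\text{if }\operatorname*{ess\,sup}_\Omega f\ge0,\\ \|V^{-1}\|^{-2},&\text{otherwise},\end{cases}$$ with operator norms $\|V\|$ in $L(H,L^2_\mu(\Omega))$ and $\|V^{-1}\|$ in $L(L^2_\mu(\Omega),H)$.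
   Context: $M_f(\varphi)(\omega)=f(\omega)\varphi(\omega)$ for $\mu$-a.e. $\omega$. *)

theory Defs
  imports "HOL-Probability.Probability"
begin

text \<open>Elements of L^2_mu(Omega) are represented by real-valued square-integrable
  functions; equality in L^2 is equality mu-almost everywhere.\<close>

definition sq_int :: "'w measure \<Rightarrow> ('w \<Rightarrow> real) \<Rightarrow> bool" where
  "sq_int M g \<longleftrightarrow> g \<in> borel_measurable M \<and> integrable M (\<lambda>\<omega>. (g \<omega>)\<^sup>2)"

definition L2_inner :: "'w measure \<Rightarrow> ('w \<Rightarrow> real) \<Rightarrow> ('w \<Rightarrow> real) \<Rightarrow> real" where
  "L2_inner M g h = (\<integral>\<omega>. g \<omega> * h \<omega> \<partial>M)"

definition L2_norm :: "'w measure \<Rightarrow> ('w \<Rightarrow> real) \<Rightarrow> real" where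
  "L2_norm M g = sqrt (L2_inner M g g)"

definition Linf :: "'w measure \<Rightarrow> ('w \<Rightarrow> real) \<Rightarrow> bool" where
  "Linf M f \<longleftrightarrow> f \<in> borel_measurable M \<and> (\<exists>C. AE \<omega> in M. \<bar>f \<omega>\<bar> \<le> C)"

definition mult_op :: "('w \<Rightarrow> real) \<Rightarrow> ('w \<Rightarrow> real) \<Rightarrow> ('w \<Rightarrow> real)" where
  "mult_op f \<phi> = (\<lambda>\<omega>. f \<omega> * \<phi> \<omega>)"

definition bounded_linear_to_L2 :: "'w measure \<Rightarrow> ('h::real_normed_vector \<Rightarrow> 'w \<Rightarrow> real) \<Rightarrow> bool" where
  "bounded_linear_to_L2 M V \<longleftrightarrow>
     (\<forall>x. sq_int M (V x)) \<and>
     (\<forall>a b x y. AE \<omega> in M. V (a *\<^sub>R x + b *\<^sub>R y) \<omega> = a * V x \<omega> + b * V y \<omega>) \<and>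
     (\<exists>C. \<forall>x. L2_norm M (V x) \<le> C * norm x)"

definition invertible_to_L2 :: "'w measure \<Rightarrow> ('h::real_normed_vector \<Rightarrow> 'w \<Rightarrow> real) \<Rightarrow> bool" where
  "invertible_to_L2 M V \<longleftrightarrow>
     (\<forall>x y. (AE \<omega> in M. V x \<omega> = V y \<omega>) \<longrightarrow> x = y) \<and>
     (\<forall>g. sq_int M g \<longrightarrow> (\<exists>x. AE \<omega> in M. V x \<omega> = g \<omega>)) \<and>
     (\<exists>C. \<forall>x. norm x \<le> C * L2_norm M (V x))"

definition inv_op :: "'w measure \<Rightarrow> ('h \<Rightarrow> 'w \<Rightarrow> real) \<Rightarrow> ('w \<Rightarrow> real) \<Rightarrow> 'h" where
  "inv_op M V g = (SOME x. AE \<omega> in M. V x \<omega> = g \<omega>)"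

text \<open>Operator norms (as Isabelle's onorm: SUP of ratio, 0/0 = 0).\<close>
definition op_norm_V :: "'w measure \<Rightarrow> ('h::real_normed_vector \<Rightarrow> 'w \<Rightarrow> real) \<Rightarrow> real" where
  "op_norm_V M V = (SUP x. L2_norm M (V x) / norm x)"

definition op_norm_Vinv :: "'w measure \<Rightarrow> ('h::real_normed_vector \<Rightarrow> 'w \<Rightarrow> real) \<Rightarrow> real" where
  "op_norm_Vinv M V = (SUP g\<in>{g. sq_int M g}. norm (inv_op M V g) / L2_norm M g)"

definition ess_sup_real :: "'w measure \<Rightarrow> ('w \<Rightarrow> real) \<Rightarrow> real" where
  "ess_sup_real M f = real_of_ereal (esssup M (\<lambda>\<omega>. ereal (f \<omega>)))"

definition c_tilde :: "'w measure \<Rightarrow> ('w \<Rightarrow> real) \<Rightarrow> ('h::real_normed_vector \<Rightarrow> 'w \<Rightarrow> real) \<Rightarrow> real" where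
  "c_tilde M f V = (if ess_sup_real M f \<ge> 0 then (op_norm_V M V)\<^sup>2 else 1 / (op_norm_Vinv M V)\<^sup>2)"

definition lambda_tilde :: "'w measure \<Rightarrow> ('w \<Rightarrow> real) \<Rightarrow> ('h::real_normed_vector \<Rightarrow> 'w \<Rightarrow> real) \<Rightarrow> real" where
  "lambda_tilde M f V = - ess_sup_real M f * c_tilde M f V"

definition lambda_convex :: "real \<Rightarrow> ('h::real_normed_vector \<Rightarrow> real) \<Rightarrow> bool" where
  "lambda_convex lam F \<longleftrightarrow> (\<forall>x1 x2 \<theta>. 0 \<le> \<theta> \<and> \<theta> \<le> 1 \<longrightarrow>
     F ((1 - \<theta>) *\<^sub>R x1 + \<theta> *\<^sub>R x2) \<le> (1 - \<theta>) * F x1 + \<theta> * F x2 - lam * (\<theta> * (1 - \<theta>) / 2) * (norm (x1 - x2))\<^sup>2)"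

end

theory Submission
  imports Defs
begin

lemma integrable_fsq:
  assumes f: "Linf M f" and g: "sq_int M g"
  shows "integrable M (\<lambda>\<omega>. g \<omega> * (f \<omega> * g \<omega>))"
proof -
  obtain C where C: "AE \<omega> in M. \<bar>f \<omega>\<bar> \<le> C" and fm: "f \<in> borel_measurable M"
    using f unfolding Linf_def by blast
  have gm: "g \<in> borel_measurable M" and gi: "integrable M (\<lambda>\<omega>. (g \<omega>)\<^sup>2)"
    using g unfolding sq_int_def by auto
  show ?thesis
  proof (rule Bochner_Integration.integrable_bound)
    show "integrable M (\<lambda>\<omega>. C * (g \<omega>)\<^sup>2)" using gi by simp
    show "(\<lambda>\<omega>. g \<omega> * (f \<omega> * g \<omega>)) \<in> borel_measurable M" using gm fm by measurable
    show "AE x in M. norm (g x * (f x * g x)) \<le> norm (C * (g x)\<^sup>2)"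
      using C
    proof eventually_elim
      case (elim x)
      have "norm (g x * (f x * g x)) = \<bar>f x\<bar> * (g x)\<^sup>2"
        by (simp add: abs_mult power2_eq_square)
      also have "\<dots> \<le> C * (g x)\<^sup>2" using elim by (simp add: mult_right_mono)
      also have "\<dots> \<le> norm (C * (g x)\<^sup>2)" by simp
      finally show ?case .
    qed
  qed
qed

lemma L2_inner_nonneg: "0 \<le> L2_inner M g g"
  unfolding L2_inner_def by (rule integral_nonneg_AE) simp

lemma L2_norm_nonneg: "0 \<le> L2_norm M g"
  unfolding L2_norm_def using L2_inner_nonneg by simp

lemma L2_sq:
  assumes "sq_int M g"
  shows "(L2_norm M g)\<^sup>2 = (\<integral>\<omega>. (g \<omega>)\<^sup>2 \<partial>M)"
proof -
  have "0 \<le> (\<integral>\<omega>. g \<omega> * g \<omega> \<partial>M)" using L2_inner_nonneg unfolding L2_inner_def .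
  then show ?thesis unfolding L2_norm_def L2_inner_def by (simp add: power2_eq_square)
qed

theorem mainTheorem3:
  fixes M :: "'w measure"
    and f :: "'w \<Rightarrow> real"
    and V :: "'h::{real_inner, complete_space, second_countable_topology} \<Rightarrow> 'w \<Rightarrow> real"
  assumes f_Linf: "Linf M f"
    and V_bdd: "bounded_linear_to_L2 M V"
    and V_inv: "invertible_to_L2 M V"
    and A_surj: "\<forall>y. \<exists>x. AE \<omega> in M. mult_op f (V x) \<omega> = V y \<omega>"
  shows "lambda_convex (lambda_tilde M f V) (\<lambda>x. - (1/2) * L2_inner M (V x) (mult_op f (V x)))"
proof -
  define Q where "Q x = (\<integral>\<omega>. V x \<omega> * (f \<omega> * V x \<omega>) \<partial>M)" for x
  define N where "N x = L2_norm M (V x)" for x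
  define S where "S = ess_sup_real M f"
  have sq: "sq_int M (V x)" for x using V_bdd unfolding bounded_linear_to_L2_def by blast
  have lin: "AE \<omega> in M. V (a *\<^sub>R x + b *\<^sub>R y) \<omega> = a * V x \<omega> + b * V y \<omega>" for a b x y
    using V_bdd unfolding bounded_linear_to_L2_def by blast
  obtain C where C: "\<And>x. N x \<le> C * norm x"
    using V_bdd unfolding bounded_linear_to_L2_def N_def by blast
  have Nnn: "0 \<le> N x" for x unfolding N_def by (rule L2_norm_nonneg)
  have Nsq: "(N x)\<^sup>2 = (\<integral>\<omega>. (V x \<omega>)\<^sup>2 \<partial>M)" for x unfolding N_def by (rule L2_sq[OF sq])
  have int: "integrable M (\<lambda>\<omega>. V x \<omega> * (f \<omega> * V x \<omega>))" for x
    by (rule integrable_fsq[OF f_Linf sq])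
  have fm: "f \<in> borel_measurable M" using f_Linf unfolding Linf_def by blast
  have N0: "N 0 = 0" using C[of 0] Nnn[of 0] by simp
  have V0: "AE \<omega> in M. V 0 \<omega> = 0"
  proof -
    have "(\<integral>\<omega>. (V 0 \<omega>)\<^sup>2 \<partial>M) = 0" using Nsq[of 0] N0 by simp
    moreover have "integrable M (\<lambda>\<omega>. (V 0 \<omega>)\<^sup>2)" using sq unfolding sq_int_def by blast
    ultimately have "AE \<omega> in M. (V 0 \<omega>)\<^sup>2 = 0"
      by (subst integral_nonneg_eq_0_iff_AE[symmetric]) auto
    then show ?thesis by eventually_elim simp
  qed
  have key: "Q d \<le> S * c_tilde M f V * (norm d)\<^sup>2" for d
  proof -
    have QS: "Q d \<le> S * (N d)\<^sup>2"
    proof (cases "esssup M (\<lambda>\<omega>. ereal (f \<omega>)) = - \<infinity>")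
      case True
      have "AE \<omega> in M. ereal (f \<omega>) \<le> - \<infinity>" using esssup_AE[of "\<lambda>\<omega>. ereal (f \<omega>)" M] True by simp
      then have "AE \<omega> in M. False" by eventually_elim simp
      then have "AE \<omega> in M. V d \<omega> * (f \<omega> * V d \<omega>) = 0" by eventually_elim simp
      then have "Q d = (\<integral>\<omega>. 0 \<partial>M)" unfolding Q_def
        by (intro integral_cong_AE) (use int in auto)
      then have "Q d = 0" by simp
      moreover have "S = 0" unfolding S_def ess_sup_real_def using True by simp
      ultimately show ?thesis by simp
    next
      case False
      obtain B where B: "AE \<omega> in M. \<bar>f \<omega>\<bar> \<le> B" using f_Linf unfolding Linf_def by blast
      have "AE \<omega> in M. ereal (f \<omega>) \<le> ereal B" using B by eventually_elim auto
      then have "esssup M (\<lambda>\<omega>. ereal (f \<omega>)) \<le> ereal B" using fm by (intro esssup_I) auto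
      with False have fin: "esssup M (\<lambda>\<omega>. ereal (f \<omega>)) = ereal S"
        unfolding S_def ess_sup_real_def by (cases "esssup M (\<lambda>\<omega>. ereal (f \<omega>))") auto
      have "AE \<omega> in M. f \<omega> \<le> S" using esssup_AE[of "\<lambda>\<omega>. ereal (f \<omega>)" M] unfolding fin
        by eventually_elim simp
      then have "AE \<omega> in M. V d \<omega> * (f \<omega> * V d \<omega>) \<le> S * (V d \<omega>)\<^sup>2"
      proof eventually_elim
        case (elim \<omega>)
        have "V d \<omega> * (f \<omega> * V d \<omega>) = f \<omega> * (V d \<omega>)\<^sup>2" by (simp add: power2_eq_square)
        also have "\<dots> \<le> S * (V d \<omega>)\<^sup>2" using elim by (simp add: mult_right_mono)
        finally show ?case .
      qed
      then have "Q d \<le> (\<integral>\<omega>. S * (V d \<omega>)\<^sup>2 \<partial>M)" unfolding Q_def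
        using int[of d] sq[of d] unfolding sq_int_def by (intro integral_mono_AE) auto
      also have "\<dots> = S * (N d)\<^sup>2" using Nsq[of d] by simp
      finally show ?thesis .
    qed
    show ?thesis
    proof (cases "S \<ge> 0")
      case True
      have ct: "c_tilde M f V = (op_norm_V M V)\<^sup>2" unfolding c_tilde_def using True S_def by simp
      have bdd: "bdd_above (range (\<lambda>x. L2_norm M (V x) / norm x))"
      proof (rule bdd_aboveI2)
        fix x show "L2_norm M (V x) / norm x \<le> \<bar>C\<bar>"
        proof (cases "x = 0")
          case True then show ?thesis by simp
        next
          case False
          have "N x \<le> \<bar>C\<bar> * norm x" using C[of x] by (smt (verit) mult_right_mono norm_ge_zero)
          then show ?thesis using False unfolding N_def by (simp add: divide_le_eq)
        qed
      qed
      have up: "N x / norm x \<le> op_norm_V M V" for x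
        unfolding op_norm_V_def N_def by (rule cSUP_upper[OF _ bdd]) simp
      have onn: "0 \<le> op_norm_V M V" using up[of 0] by simp
      have Nd: "N d \<le> op_norm_V M V * norm d"
      proof (cases "d = 0")
        case True then show ?thesis using N0 by simp
      next
        case False then show ?thesis using up[of d] by (simp add: divide_le_eq mult.commute)
      qed
      have "(N d)\<^sup>2 \<le> (op_norm_V M V * norm d)\<^sup>2" using Nd Nnn[of d] by (intro power_mono) auto
      then have "S * (N d)\<^sup>2 \<le> S * (op_norm_V M V * norm d)\<^sup>2" using True by (intro mult_left_mono) auto
      then show ?thesis using QS ct by (simp add: power_mult_distrib mult.assoc)
    next
      case False
      have ct: "c_tilde M f V = 1 / (op_norm_Vinv M V)\<^sup>2" unfolding c_tilde_def using False S_def by simp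
      have inj: "\<And>x y. (AE \<omega> in M. V x \<omega> = V y \<omega>) \<Longrightarrow> x = y"
        using V_inv unfolding invertible_to_L2_def by blast
      have surj: "\<And>g. sq_int M g \<Longrightarrow> \<exists>x. AE \<omega> in M. V x \<omega> = g \<omega>"
        using V_inv unfolding invertible_to_L2_def by blast
      obtain D where D: "\<And>x. norm x \<le> D * N x"
        using V_inv unfolding invertible_to_L2_def N_def by blast
      have invop: "AE \<omega> in M. V (inv_op M V g) \<omega> = g \<omega>" if "sq_int M g" for g
        unfolding inv_op_def using surj[OF that] by (rule someI_ex)
      have bdd: "bdd_above ((\<lambda>g. norm (inv_op M V g) / L2_norm M g) ` {g. sq_int M g})"
      proof (rule bdd_aboveI2)
        fix g assume g: "g \<in> {g. sq_int M g}"
        let ?x = "inv_op M V g"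
        have "L2_norm M (V ?x) = L2_norm M g" unfolding L2_norm_def L2_inner_def
          using invop[of g] g sq[of ?x] by (intro arg_cong[where f=sqrt] integral_cong_AE)
            (auto simp: sq_int_def elim!: eventually_mono)
        then have "norm ?x \<le> D * L2_norm M g" using D[of ?x] unfolding N_def by simp
        moreover have "0 \<le> L2_norm M g" by (rule L2_norm_nonneg)
        ultimately have "norm ?x \<le> \<bar>D\<bar> * L2_norm M g" by (smt (verit) mult_right_mono)
        then show "norm ?x / L2_norm M g \<le> \<bar>D\<bar>" by (cases "L2_norm M g = 0") (use L2_norm_nonneg[of M g] in \<open>auto simp: divide_le_eq\<close>)
      qed
      have invd: "inv_op M V (V x) = x" for x
        using invop[OF sq[of x]] by (rule inj)
      have up: "norm x / N x \<le> op_norm_Vinv M V" for x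
        unfolding op_norm_Vinv_def N_def
        using cSUP_upper[OF _ bdd, of "V x"] sq[of x] invd[of x] by simp
      have onn: "0 \<le> op_norm_Vinv M V" using up[of 0] by simp
      have nd: "norm d \<le> op_norm_Vinv M V * N d"
      proof (cases "N d = 0")
        case True
        have "(\<integral>\<omega>. (V d \<omega>)\<^sup>2 \<partial>M) = 0" using Nsq[of d] True by simp
        moreover have "integrable M (\<lambda>\<omega>. (V d \<omega>)\<^sup>2)" using sq unfolding sq_int_def by blast
        ultimately have "AE \<omega> in M. (V d \<omega>)\<^sup>2 = 0"
          by (subst integral_nonneg_eq_0_iff_AE[symmetric]) auto
        then have "AE \<omega> in M. V d \<omega> = V 0 \<omega>" using V0 by eventually_elim simp
        then have "d = 0" by (rule inj)
        then show ?thesis using N0 by simp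
      next
        case False
        then have "0 < N d" using Nnn[of d] by simp
        then show ?thesis using up[of d] by (simp add: divide_le_eq mult.commute)
      qed
      have "S * (N d)\<^sup>2 \<le> S * (1 / (op_norm_Vinv M V)\<^sup>2) * (norm d)\<^sup>2"
      proof (cases "op_norm_Vinv M V = 0")
        case True then show ?thesis using False by (simp add: mult_nonpos_nonneg)
      next
        case nz: False
        have "(norm d)\<^sup>2 \<le> (op_norm_Vinv M V * N d)\<^sup>2" using nd by (intro power_mono) auto
        then have "(norm d)\<^sup>2 / (op_norm_Vinv M V)\<^sup>2 \<le> (N d)\<^sup>2" using nz
          by (simp add: divide_le_eq power_mult_distrib mult.commute)
        then have "S * (N d)\<^sup>2 \<le> S * ((norm d)\<^sup>2 / (op_norm_Vinv M V)\<^sup>2)" using False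
          by (intro mult_left_mono_neg) auto
        then show ?thesis by simp
      qed
      then show ?thesis using QS ct by simp
    qed
  qed
  show ?thesis unfolding lambda_convex_def
  proof (intro allI impI)
    fix x1 x2 :: 'h and \<theta> :: real
    assume th: "0 \<le> \<theta> \<and> \<theta> \<le> 1"
    define y where "y = (1 - \<theta>) *\<^sub>R x1 + \<theta> *\<^sub>R x2"
    define d where "d = x1 - x2"
    have dy: "d = 1 *\<^sub>R x1 + (-1) *\<^sub>R x2" unfolding d_def by simp
    have ae: "AE \<omega> in M. V y \<omega> * (f \<omega> * V y \<omega>) =
        (1 - \<theta>) * (V x1 \<omega> * (f \<omega> * V x1 \<omega>)) + \<theta> * (V x2 \<omega> * (f \<omega> * V x2 \<omega>))
        - \<theta> * (1 - \<theta>) * (V d \<omega> * (f \<omega> * V d \<omega>))"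
      using lin[of "1 - \<theta>" x1 \<theta> x2] lin[of 1 x1 "-1" x2] unfolding y_def dy[symmetric]
    proof eventually_elim
      case (elim \<omega>)
      have e1: "V y \<omega> = (1 - \<theta>) * V x1 \<omega> + \<theta> * V x2 \<omega>" using elim(1) by (simp add: y_def)
      have e2: "V d \<omega> = V x1 \<omega> - V x2 \<omega>" using elim(2) by (simp add: dy)
      show ?case unfolding elim(1) e2 by (simp add: algebra_simps)
    qed
    with ae have "Q y = (\<integral>\<omega>. (1 - \<theta>) * (V x1 \<omega> * (f \<omega> * V x1 \<omega>)) + \<theta> * (V x2 \<omega> * (f \<omega> * V x2 \<omega>))
        - \<theta> * (1 - \<theta>) * (V d \<omega> * (f \<omega> * V d \<omega>)) \<partial>M)"
      unfolding Q_def using int[of y] int[of x1] int[of x2] int[of d] by (intro integral_cong_AE) auto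
    also have "\<dots> = (1 - \<theta>) * Q x1 + \<theta> * Q x2 - \<theta> * (1 - \<theta>) * Q d"
      unfolding Q_def using int[of x1] int[of x2] int[of d] by simp
    finally have Qy: "Q y = (1 - \<theta>) * Q x1 + \<theta> * Q x2 - \<theta> * (1 - \<theta>) * Q d" .
    have tt: "0 \<le> \<theta> * (1 - \<theta>)" using th by simp
    have "\<theta> * (1 - \<theta>) * Q d \<le> \<theta> * (1 - \<theta>) * (S * c_tilde M f V * (norm d)\<^sup>2)"
      using key[of d] tt by (rule mult_left_mono)
    moreover have L: "\<And>x. L2_inner M (V x) (mult_op f (V x)) = Q x"
      unfolding L2_inner_def mult_op_def Q_def by simp
    ultimately show "- (1 / 2) * L2_inner M (V y) (mult_op f (V y))
       \<le> (1 - \<theta>) * (- (1 / 2) * L2_inner M (V x1) (mult_op f (V x1))) +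
          \<theta> * (- (1 / 2) * L2_inner M (V x2) (mult_op f (V x2))) -
          lambda_tilde M f V * (\<theta> * (1 - \<theta>) / 2) * (norm (x1 - x2))\<^sup>2"
      unfolding L Qy lambda_tilde_def S_def[symmetric] d_def[symmetric]
      by (simp add: field_simps)
  qed
qed

end
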